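(* For every instance $(A,C,k)$, every committee $W$ that the Greedy Justified Candidate Rule (GJCR) can output (under any tie-breaking), and every AV-completion $\overline{W}$ of $W$, the utilitarian ratio of $\overline{W}$ is at least $\frac{2}{\sqrt{k}}-\frac1k$.
   Context: An instance $(A,C,k)$ consists of a finite nonempty candidate set $C$, voters $N=\{1,\dots,n\}$, approval sets $A_i\subseteq C$, and a committee size $1\le k\le|C|$. $N_c=\{i: c\in A_i\}$. $\mathrm{sw}(W)=\sum_i|A_i\cap W|$; the utilitarian ratio of a committee $W$ ($|W|\le k$) is $\mathrm{sw}(W)/\max\{\mathrm{sw}(W'):|W'|=k\}$. GJCR starts with $W=\emptyset$ and repeatedly does the following: if there exist $c\in C\setminus W$, $\ell\in\{1,\dots,k\}$ and $N'\subseteq N_c$ with $|N'|\ge\ell n/k$ and $|A_i\cap W|<\ell$ for all $i\in N'$, it picks such a triple with $|N'|$ maximum (ties broken arbitrarily) and adds $c$ to $W$; otherwise it terminates and outputs $W$. An AV-completion of $W$ is $W\cup T$ with $T\subseteq C\setminus W$, $|T|=k-|W|$, maximizing $\sum_{c\in T}|N_c|$. *)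

theory Defs
  imports Complex_Main
begin

definition voters :: "nat \<Rightarrow> nat set" where
  "voters n = {1..n}"

definition is_instance :: "'c set \<Rightarrow> nat \<Rightarrow> (nat \<Rightarrow> 'c set) \<Rightarrow> nat \<Rightarrow> bool" where
  "is_instance C n A k \<longleftrightarrow> finite C \<and> C \<noteq> {} \<and> (\<forall>i\<in>voters n. A i \<subseteq> C)
     \<and> 1 \<le> k \<and> k \<le> card C"

definition supporters :: "nat \<Rightarrow> (nat \<Rightarrow> 'c set) \<Rightarrow> 'c \<Rightarrow> nat set" where
  "supporters n A c = {i \<in> voters n. c \<in> A i}"

definition sw :: "nat \<Rightarrow> (nat \<Rightarrow> 'c set) \<Rightarrow> 'c set \<Rightarrow> nat" where
  "sw n A W = (\<Sum>i\<in>voters n. card (A i \<inter> W))"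

definition opt_sw :: "'c set \<Rightarrow> nat \<Rightarrow> (nat \<Rightarrow> 'c set) \<Rightarrow> nat \<Rightarrow> nat" where
  "opt_sw C n A k = Max {sw n A W' | W'. W' \<subseteq> C \<and> card W' = k}"

definition util_ratio :: "'c set \<Rightarrow> nat \<Rightarrow> (nat \<Rightarrow> 'c set) \<Rightarrow> nat \<Rightarrow> 'c set \<Rightarrow> real" where
  "util_ratio C n A k W = real (sw n A W) / real (opt_sw C n A k)"

definition gjcr_triple :: "'c set \<Rightarrow> nat \<Rightarrow> (nat \<Rightarrow> 'c set) \<Rightarrow> nat \<Rightarrow> 'c set
    \<Rightarrow> 'c \<Rightarrow> nat \<Rightarrow> nat set \<Rightarrow> bool" where
  "gjcr_triple C n A k W c l N' \<longleftrightarrow>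
     c \<in> C - W \<and> 1 \<le> l \<and> l \<le> k \<and> N' \<subseteq> supporters n A c
     \<and> real (card N') \<ge> real l * real n / real k
     \<and> (\<forall>i\<in>N'. card (A i \<inter> W) < l)"

definition gjcr_step :: "'c set \<Rightarrow> nat \<Rightarrow> (nat \<Rightarrow> 'c set) \<Rightarrow> nat \<Rightarrow> 'c set \<Rightarrow> 'c set \<Rightarrow> bool" where
  "gjcr_step C n A k W W' \<longleftrightarrow>
     (\<exists>c l N'. gjcr_triple C n A k W c l N'
        \<and> (\<forall>c2 l2 N2. gjcr_triple C n A k W c2 l2 N2 \<longrightarrow> card N2 \<le> card N')
        \<and> W' = insert c W)"

inductive gjcr_reach :: "'c set \<Rightarrow> nat \<Rightarrow> (nat \<Rightarrow> 'c set) \<Rightarrow> nat \<Rightarrow> 'c set \<Rightarrow> bool"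
  for C n A k where
  start: "gjcr_reach C n A k {}"
| step: "gjcr_reach C n A k W \<Longrightarrow> gjcr_step C n A k W W' \<Longrightarrow> gjcr_reach C n A k W'"

definition gjcr_output :: "'c set \<Rightarrow> nat \<Rightarrow> (nat \<Rightarrow> 'c set) \<Rightarrow> nat \<Rightarrow> 'c set \<Rightarrow> bool" where
  "gjcr_output C n A k W \<longleftrightarrow> gjcr_reach C n A k W
     \<and> \<not> (\<exists>c l N'. gjcr_triple C n A k W c l N')"

definition av_completion :: "'c set \<Rightarrow> nat \<Rightarrow> (nat \<Rightarrow> 'c set) \<Rightarrow> nat \<Rightarrow> 'c set \<Rightarrow> 'c set \<Rightarrow> bool" where
  "av_completion C n A k W Wb \<longleftrightarrow>
     (\<exists>T. T \<subseteq> C - W \<and> card T = k - card W \<and> Wb = W \<union> T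
        \<and> (\<forall>T'. T' \<subseteq> C - W \<and> card T' = k - card W \<longrightarrow>
              (\<Sum>c\<in>T'. card (supporters n A c)) \<le> (\<Sum>c\<in>T. card (supporters n A c))))"

end

theory Submission
  imports Defs
begin

lemma sw_sum:
  assumes "finite X"
  shows "sw n A X = (\<Sum>c\<in>X. card (supporters n A c))"
proof -
  have "sw n A X = (\<Sum>i\<in>voters n. \<Sum>c\<in>X. if c \<in> A i then 1 else 0)"
    unfolding sw_def
    by (rule sum.cong, simp, subst sum.If_cases, use assms in \<open>auto simp: Int_commute\<close>)
  also have "\<dots> = (\<Sum>c\<in>X. \<Sum>i\<in>voters n. if c \<in> A i then 1 else 0)"
    by (rule sum.swap)
  also have "\<dots> = (\<Sum>c\<in>X. card (supporters n A c))"
    unfolding supporters_def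
    by (rule sum.cong, simp, subst sum.If_cases, auto simp: voters_def intro!: arg_cong[where f=card])
  finally show ?thesis .
qed

definition INV2 :: "'c set \<Rightarrow> nat \<Rightarrow> (nat \<Rightarrow> 'c set) \<Rightarrow> nat \<Rightarrow> real \<Rightarrow> 'c set
   \<Rightarrow> (nat\<Rightarrow>real) \<Rightarrow> (nat\<Rightarrow>nat) \<Rightarrow> nat \<Rightarrow> nat set \<Rightarrow> real \<Rightarrow> bool" where
"INV2 C n A k B W \<phi> m \<beta> Big G \<longleftrightarrow>
   (\<Sum>i\<in>voters n. \<phi> i) = real (card W) \<and>
   (\<forall>i\<in>voters n. \<phi> i \<le> real k / real n) \<and>
   (\<forall>i\<in>voters n. \<phi> i \<le> real (m i) / G) \<and>
   (\<forall>i\<in>voters n. m i \<le> card (A i \<inter> W)) \<and>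
   G > 0 \<and>
   (\<forall>c l N2. gjcr_triple C n A k W c l N2 \<longrightarrow> real (card N2) \<le> G) \<and>
   Big \<subseteq> voters n \<and>
   (\<forall>i\<in>Big. 1 \<le> m i) \<and>
   (G < B \<longrightarrow> (\<forall>i\<in>Big. \<phi> i < real (m i) / G)) \<and>
   (B \<le> G \<longrightarrow> \<beta> = card W) \<and>
   (real \<beta> * real n / real k < B \<longrightarrow> (\<forall>i\<in>Big. \<phi> i < real k / real n)) \<and>
   (1 \<le> \<beta> \<longrightarrow> Big \<noteq> {}) \<and>
   \<beta> \<le> card {c\<in>W. B \<le> real (card (supporters n A c))} \<and>
   (\<forall>c0\<in>C. c0 \<notin> W \<longrightarrow> B \<le> real (card (supporters n A c0)) \<longrightarrow>
      (\<forall>j. j \<le> card W \<longrightarrow> real j * real n / real k \<le> B \<longrightarrow> j \<le> \<beta>))"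

definition INV :: "'c set \<Rightarrow> nat \<Rightarrow> (nat \<Rightarrow> 'c set) \<Rightarrow> nat \<Rightarrow> real \<Rightarrow> 'c set \<Rightarrow> bool" where
"INV C n A k B W \<longleftrightarrow> W \<subseteq> C \<and> (\<forall>c\<in>W. real n / real k \<le> real (card (supporters n A c))) \<and>
 (\<exists>\<phi> m \<beta> Big G. INV2 C n A k B W \<phi> m \<beta> Big G)"

lemma supp_le_n: "card (supporters n A c) \<le> n"
proof -
  have "card (supporters n A c) \<le> card (voters n)"
    by (rule card_mono) (auto simp: voters_def supporters_def)
  thus ?thesis by (simp add: voters_def)
qed

lemma INV_init:
  assumes "is_instance C n A k" "n > 0"
  shows "INV C n A k B {}"
proof -
  have "\<forall>c l N2. gjcr_triple C n A k {} c l N2 \<longrightarrow> real (card N2) \<le> real n + 1"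
  proof (intro allI impI)
    fix c l N2 assume "gjcr_triple C n A k {} c l N2"
    hence "N2 \<subseteq> supporters n A c" by (simp add: gjcr_triple_def)
    hence "card N2 \<le> card (supporters n A c)"
      by (intro card_mono) (auto simp: supporters_def voters_def)
    with supp_le_n[of n A c] show "real (card N2) \<le> real n + 1" by linarith
  qed
  moreover have "k > 0" using assms(1) by (simp add: is_instance_def)
  ultimately have "INV2 C n A k B {} (\<lambda>_. 0) (\<lambda>_. 0) 0 {} (real n + 1)"
    unfolding INV2_def by (auto simp: voters_def)
  thus ?thesis unfolding INV_def by blast
qed

lemma INV_step:
  assumes inst: "is_instance C n A k" and n0: "n > 0"
    and inv: "INV C n A k B W" and st: "gjcr_step C n A k W W'"
  shows "INV C n A k B W'"
proof -
  from st obtain p l N' where tr: "gjcr_triple C n A k W p l N'"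
    and mx: "\<And>c2 l2 N2. gjcr_triple C n A k W c2 l2 N2 \<Longrightarrow> card N2 \<le> card N'"
    and W': "W' = insert p W"
    unfolding gjcr_step_def by blast
  from inv have WC: "W \<subseteq> C" and P1: "\<forall>c\<in>W. real n / real k \<le> real (card (supporters n A c))"
    unfolding INV_def by auto
  from inv obtain \<phi> m \<beta> Big G where
    i1: "(\<Sum>i\<in>voters n. \<phi> i) = real (card W)" and
    i2: "\<forall>i\<in>voters n. \<phi> i \<le> real k / real n" and
    i3: "\<forall>i\<in>voters n. \<phi> i \<le> real (m i) / G" and
    i4: "\<forall>i\<in>voters n. m i \<le> card (A i \<inter> W)" and
    i5: "G > 0" and
    i6: "\<forall>c l N2. gjcr_triple C n A k W c l N2 \<longrightarrow> real (card N2) \<le> G" and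
    i7: "Big \<subseteq> voters n" and
    i8: "\<forall>i\<in>Big. 1 \<le> m i" and
    i9: "G < B \<longrightarrow> (\<forall>i\<in>Big. \<phi> i < real (m i) / G)" and
    i10: "B \<le> G \<longrightarrow> \<beta> = card W" and
    i11: "real \<beta> * real n / real k < B \<longrightarrow> (\<forall>i\<in>Big. \<phi> i < real k / real n)" and
    i12: "1 \<le> \<beta> \<longrightarrow> Big \<noteq> {}" and
    i13: "\<beta> \<le> card {c\<in>W. B \<le> real (card (supporters n A c))}" and
    i14: "\<forall>c0\<in>C. c0 \<notin> W \<longrightarrow> B \<le> real (card (supporters n A c0)) \<longrightarrow>
      (\<forall>j. j \<le> card W \<longrightarrow> real j * real n / real k \<le> B \<longrightarrow> j \<le> \<beta>)"
  proof -
    from inv obtain \<phi> m \<beta> Big G where H: "INV2 C n A k B W \<phi> m \<beta> Big G"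
      unfolding INV_def by blast
    show ?thesis using H unfolding INV2_def apply (elim conjE) apply (rule that[where \<phi>=\<phi> and m=m and \<beta>=\<beta> and Big=Big and G=G]) apply assumption+ done
  qed
  have finC: "finite C" and k0: "k > 0" using inst by (auto simp: is_instance_def)
  have finW: "finite W" using WC finC finite_subset by blast
  from tr have pC: "p \<in> C" "p \<notin> W" and l1: "1 \<le> l" and lk: "l \<le> k"
    and Nsub: "N' \<subseteq> supporters n A p"
    and gN: "real (card N') \<ge> real l * real n / real k"
    and lowN: "\<forall>i\<in>N'. card (A i \<inter> W) < l"
    unfolding gjcr_triple_def by auto
  define q where "q = real n / real k"
  have q0: "q > 0" using n0 k0 by (simp add: q_def)
  define g where "g = real (card N')"
  have NV: "N' \<subseteq> voters n" using Nsub by (auto simp: supporters_def)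
  have finN: "finite N'" using NV finite_subset by (auto simp: voters_def)
  have glq: "g \<ge> real l * q" using gN by (simp add: g_def q_def)
  have gq: "g \<ge> q" using glq l1 q0
    by (metis mult_1 mult_right_mono of_nat_1 of_nat_le_iff order_trans less_imp_le)
  have g0: "g > 0" using gq q0 by linarith
  have Nne: "N' \<noteq> {}" using g0 by (auto simp: g_def)
  have gG: "g \<le> G" using i6 tr by (auto simp: g_def)
  have lg: "real l / g \<le> real k / real n"
  proof -
    have "real l * real n \<le> g * real k" using gN k0 by (simp add: g_def field_simps)
    thus ?thesis using g0 n0 k0 by (simp add: field_simps)
  qed
  have mlt: "\<forall>i\<in>N'. m i + 1 \<le> l" using lowN i4 NV by fastforce
  have gle: "\<forall>i\<in>N'. real (m i + 1) / g \<le> real k / real n"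
  proof
    fix i assume "i \<in> N'"
    hence "m i + 1 \<le> l" using mlt by blast
    hence "real (m i + 1) \<le> real l" by (simp only: of_nat_le_iff)
    hence "real (m i + 1) / g \<le> real l / g" using g0 by (simp add: divide_right_mono)
    thus "real (m i + 1) / g \<le> real k / real n" using lg by linarith
  qed
  have dinc: "\<forall>i\<in>N'. card (A i \<inter> W') = card (A i \<inter> W) + 1"
  proof
    fix i assume "i \<in> N'"
    hence "p \<in> A i" using Nsub by (auto simp: supporters_def)
    hence "A i \<inter> W' = insert p (A i \<inter> W)" using W' by auto
    thus "card (A i \<inter> W') = card (A i \<inter> W) + 1" using pC finW by simp
  qed
  have dmono: "\<And>i. card (A i \<inter> W) \<le> card (A i \<inter> W')"
    using W' finW by (intro card_mono) auto
  have cW': "card W' = card W + 1" using W' pC finW by simp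
  have sup_p: "real (card (supporters n A p)) \<ge> g"
    unfolding g_def using Nsub by (simp add: card_mono supporters_def voters_def)
  have mG: "\<And>i. real (m i) / G \<le> real (m i) / g"
    using g0 gG by (simp add: frac_le)
  have strictBig: "g < B \<Longrightarrow> \<forall>i\<in>Big. \<phi> i < real (m i) / g"
  proof
    fix i assume gB: "g < B" and iB: "i \<in> Big"
    show "\<phi> i < real (m i) / g"
    proof (cases "G < B")
      case True
      thus ?thesis using i9 iB mG[of i] by fastforce
    next
      case False
      hence "g < G" using gB by linarith
      moreover have "real (m i) \<ge> 1" using i8 iB by simp
      ultimately have "real (m i) / G < real (m i) / g" using g0
        by (simp add: divide_strict_left_mono)
      thus ?thesis using i3 iB i7 by fastforce
    qed
  qed
  define \<phi>' where "\<phi>' = (\<lambda>i. \<phi> i + (if i \<in> N' then 1 / g else 0))"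
  define m' where "m' = (\<lambda>i. if i \<in> N' then m i + 1 else m i)"
  define \<beta>' where "\<beta>' = (if B \<le> g then \<beta> + 1 else \<beta>)"
  define Big' where "Big' = (if B \<le> g then Big \<union> N' else Big)"
  have memb: "\<And>i. i \<in> N' \<Longrightarrow> i \<in> voters n \<Longrightarrow> \<phi> i + 1 / g \<le> real (m i + 1) / g"
  proof -
    fix i assume "i \<in> N'" "i \<in> voters n"
    hence "\<phi> i \<le> real (m i) / g" using i3 mG[of i] by fastforce
    thus "\<phi> i + 1 / g \<le> real (m i + 1) / g" by (simp add: add_divide_distrib)
  qed
  have c1: "(\<Sum>i\<in>voters n. \<phi>' i) = real (card W')"
  proof -
    have "(\<Sum>i\<in>voters n. \<phi>' i) = (\<Sum>i\<in>voters n. \<phi> i) + (\<Sum>i\<in>voters n. if i \<in> N' then 1 / g else 0)"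
      unfolding \<phi>'_def by (simp add: sum.distrib)
    also have "(\<Sum>i\<in>voters n. if i \<in> N' then 1 / g else 0) = (\<Sum>i\<in>N'. 1 / g)"
    proof -
      have "voters n \<inter> N' = N'" using NV by auto
      moreover have "finite (voters n)" by (simp add: voters_def)
      ultimately show ?thesis using sum.inter_restrict[of "voters n" "\<lambda>_. 1 / g" N'] by simp
    qed
    also have "\<dots> = 1" using g0 by (simp add: g_def)
    finally show ?thesis using i1 cW' by simp
  qed
  have c2: "\<forall>i\<in>voters n. \<phi>' i \<le> real k / real n"
  proof
    fix i assume iV: "i \<in> voters n"
    show "\<phi>' i \<le> real k / real n"
    proof (cases "i \<in> N'")
      case True
      have "\<phi>' i \<le> real (m i + 1) / g" using memb[OF True iV] True by (simp add: \<phi>'_def)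
      thus ?thesis using gle True by fastforce
    next
      case False thus ?thesis using i2 iV by (simp add: \<phi>'_def)
    qed
  qed
  have c3: "\<forall>i\<in>voters n. \<phi>' i \<le> real (m' i) / g"
  proof
    fix i assume iV: "i \<in> voters n"
    show "\<phi>' i \<le> real (m' i) / g"
    proof (cases "i \<in> N'")
      case True
      thus ?thesis using memb[OF True iV] by (simp add: \<phi>'_def m'_def)
    next
      case False
      have "\<phi> i \<le> real (m i) / g" using i3 iV mG[of i] by fastforce
      thus ?thesis using False by (simp add: \<phi>'_def m'_def)
    qed
  qed
  have c4: "\<forall>i\<in>voters n. m' i \<le> card (A i \<inter> W')"
  proof
    fix i assume iV: "i \<in> voters n"
    show "m' i \<le> card (A i \<inter> W')"
    proof (cases "i \<in> N'")
      case True
      thus ?thesis using i4 iV dinc by (simp add: m'_def)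
    next
      case False
      have "m i \<le> card (A i \<inter> W)" using i4 iV by blast
      thus ?thesis using False dmono[of i] by (simp add: m'_def)
    qed
  qed
  have c6: "\<forall>c l N2. gjcr_triple C n A k W' c l N2 \<longrightarrow> real (card N2) \<le> g"
  proof (intro allI impI)
    fix c l2 N2 assume "gjcr_triple C n A k W' c l2 N2"
    hence "gjcr_triple C n A k W c l2 N2"
      unfolding gjcr_triple_def W' using dmono W' by (auto, meson le_less_trans dmono)
    thus "real (card N2) \<le> g" using mx by (simp add: g_def)
  qed
  have c7: "Big' \<subseteq> voters n" using i7 NV by (auto simp: Big'_def)
  have c8: "\<forall>i\<in>Big'. 1 \<le> m' i" using i8 by (auto simp: Big'_def m'_def)
  have c9: "g < B \<longrightarrow> (\<forall>i\<in>Big'. \<phi>' i < real (m' i) / g)"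
  proof
    assume gB: "g < B"
    show "\<forall>i\<in>Big'. \<phi>' i < real (m' i) / g"
    proof
      fix i assume "i \<in> Big'"
      hence iB: "i \<in> Big" using gB by (simp add: Big'_def)
      have "\<phi> i < real (m i) / g" using strictBig gB iB by blast
      thus "\<phi>' i < real (m' i) / g" unfolding \<phi>'_def m'_def
        by (auto simp: add_divide_distrib)
    qed
  qed
  have c10: "B \<le> g \<longrightarrow> \<beta>' = card W'"
    using i10 gG cW' by (auto simp: \<beta>'_def)
  have c11: "real \<beta>' * real n / real k < B \<longrightarrow> (\<forall>i\<in>Big'. \<phi>' i < real k / real n)"
  proof
    assume bB: "real \<beta>' * real n / real k < B"
    show "\<forall>i\<in>Big'. \<phi>' i < real k / real n"
    proof (cases "B \<le> g")
      case True
      hence bW: "\<beta> = card W" using i10 gG by auto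
      have "real \<beta> * real n / real k \<le> real \<beta>' * real n / real k"
        by (intro divide_right_mono mult_right_mono) (auto simp: \<beta>'_def)
      hence bq: "real \<beta> * real n / real k < B" using bB by linarith
      have B0: "B > 0" using bB by (smt (verit) divide_nonneg_nonneg of_nat_0_le_iff mult_nonneg_nonneg)
      have key: "real \<beta>' / B < real k / real n"
        using bB B0 n0 k0 by (simp add: field_simps)
      show ?thesis
      proof
        fix i assume iB: "i \<in> Big'"
        show "\<phi>' i < real k / real n"
        proof (cases "i \<in> N'")
          case True
          hence iV: "i \<in> voters n" using NV by auto
          have "m i \<le> card (A i \<inter> W)" using i4 iV by auto
          also have "\<dots> \<le> card W" using finW by (simp add: card_mono)
          finally have "real (m i + 1) \<le> real \<beta>'" using bW True \<open>B \<le> g\<close> by (simp add: \<beta>'_def)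
          hence "real (m i + 1) / g \<le> real \<beta>' / g" using g0 by (simp add: divide_right_mono)
          also have "\<dots> \<le> real \<beta>' / B" using B0 \<open>B \<le> g\<close> by (simp add: frac_le)
          finally have "\<phi>' i \<le> real \<beta>' / B" using memb[OF True iV] True by (simp add: \<phi>'_def)
          thus ?thesis using key by linarith
        next
          case False
          hence "i \<in> Big" using iB \<open>B \<le> g\<close> by (simp add: Big'_def)
          thus ?thesis using i11 bq False by (simp add: \<phi>'_def)
        qed
      qed
    next
      case False
      hence gB: "g < B" by simp
      show ?thesis
      proof
        fix i assume "i \<in> Big'"
        hence iB: "i \<in> Big" using False by (simp add: Big'_def)
        have s: "\<phi> i < real (m i) / g" using strictBig gB iB by blast
        show "\<phi>' i < real k / real n"
        proof (cases "i \<in> N'")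
          case True
          have "\<phi>' i < real (m i + 1) / g" using s True by (simp add: \<phi>'_def add_divide_distrib)
          thus ?thesis using gle True by fastforce
        next
          case F2: False
          thus ?thesis using i11 bB False iB by (simp add: \<phi>'_def \<beta>'_def)
        qed
      qed
    qed
  qed
  have c12: "1 \<le> \<beta>' \<longrightarrow> Big' \<noteq> {}" using i12 Nne by (auto simp: \<beta>'_def Big'_def)
  have c13: "\<beta>' \<le> card {c\<in>W'. B \<le> real (card (supporters n A c))}"
  proof (cases "B \<le> g")
    case True
    hence "{c\<in>W'. B \<le> real (card (supporters n A c))} = insert p {c\<in>W. B \<le> real (card (supporters n A c))}"
      using W' sup_p by auto
    moreover have "card (insert p {c\<in>W. B \<le> real (card (supporters n A c))}) = card {c\<in>W. B \<le> real (card (supporters n A c))} + 1"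
      using pC finW by simp
    ultimately show ?thesis using i13 True by (simp add: \<beta>'_def)
  next
    case False
    have "card {c\<in>W. B \<le> real (card (supporters n A c))} \<le> card {c\<in>W'. B \<le> real (card (supporters n A c))}"
      using W' finW by (intro card_mono) auto
    thus ?thesis using i13 False by (simp add: \<beta>'_def)
  qed
  have c14: "\<forall>c0\<in>C. c0 \<notin> W' \<longrightarrow> B \<le> real (card (supporters n A c0)) \<longrightarrow>
      (\<forall>j. j \<le> card W' \<longrightarrow> real j * real n / real k \<le> B \<longrightarrow> j \<le> \<beta>')"
  proof (intro ballI impI allI)
    fix c0 j assume c0C: "c0 \<in> C" and c0W: "c0 \<notin> W'" and Bc0: "B \<le> real (card (supporters n A c0))"
      and jW: "j \<le> card W'" and jB: "real j * real n / real k \<le> B"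
    have c0W0: "c0 \<notin> W" using c0W W' by auto
    show "j \<le> \<beta>'"
    proof (cases "j \<le> card W")
      case True
      hence "j \<le> \<beta>" using i14 c0C c0W0 Bc0 jB by blast
      thus ?thesis by (simp add: \<beta>'_def)
    next
      case False
      hence j: "j = card W + 1" using jW cW' by simp
      have "real (card W) * real n / real k \<le> real j * real n / real k"
        using j by (intro divide_right_mono mult_right_mono) auto
      hence "card W \<le> \<beta>" using i14 c0C c0W0 Bc0 jB by auto
      have jq: "real j * real n / real k \<le> real (card (supporters n A c0))" using jB Bc0 by linarith
      have "real (card (supporters n A c0)) \<le> real n" using supp_le_n by simp
      hence "real j * real n / real k \<le> real n" using jq by linarith
      hence "real j \<le> real k" using n0 k0 by (simp add: field_simps)
      hence jk: "j \<le> k" by simp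
      have lowc: "\<forall>i\<in>supporters n A c0. card (A i \<inter> W) < j"
      proof
        fix i show "card (A i \<inter> W) < j" using j finW by (simp add: card_mono le_imp_less_Suc)
      qed
      have "gjcr_triple C n A k W c0 j (supporters n A c0)"
        unfolding gjcr_triple_def using c0C c0W0 j jk jq lowc by auto
      hence "real (card (supporters n A c0)) \<le> g" using mx by (simp add: g_def)
      hence "B \<le> g" using Bc0 by linarith
      thus ?thesis using \<open>card W \<le> \<beta>\<close> j by (simp add: \<beta>'_def)
    qed
  qed
  have P1': "\<forall>c\<in>W'. real n / real k \<le> real (card (supporters n A c))"
    using P1 sup_p gq W' by (auto simp: q_def)
  have WC': "W' \<subseteq> C" using WC pC W' by auto
  have "INV2 C n A k B W' \<phi>' m' \<beta>' Big' g"
    unfolding INV2_def using c1 c2 c3 c4 g0 c6 c7 c8 c9 c10 c11 c12 c13 c14 by (intro conjI)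
  thus ?thesis unfolding INV_def using WC' P1' by blast
qed

lemma INV_reach:
  assumes inst: "is_instance C n A k" and n0: "n > 0"
    and "gjcr_reach C n A k W"
  shows "INV C n A k B W"
  using assms(3)
proof induction
  case start thus ?case using INV_init[OF inst n0] .
next
  case (step W W') thus ?case using INV_step[OF inst n0] by blast
qed

lemma arith1:
  fixes s q B a Y :: real
  assumes s1: "s \<ge> 1" and q0: "q > 0" and Bq: "B \<ge> q" and aq: "a * q \<ge> B"
    and Y: "Y \<ge> a * B + (s^2 - a) * q"
  shows "Y \<ge> (2 / s - 1 / s^2) * s^2 * B"
proof -
  have s0: "s \<noteq> 0" using s1 by simp
  have e: "(2 / s - 1 / s^2) * s^2 * B = (2*s - 1) * B" using s0 by (simp add: field_simps power2_eq_square)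
  have "a \<ge> B / q" using aq q0 by (simp add: field_simps)
  hence "a * (B - q) \<ge> (B / q) * (B - q)" using Bq by (intro mult_right_mono) auto
  hence "Y \<ge> (B / q) * (B - q) + s^2 * q" using Y by (simp add: algebra_simps)
  moreover have "(B / q) * (B - q) + s^2 * q - (2*s - 1) * B = (B - s*q)^2 / q"
    using q0 by (simp add: field_simps power2_eq_square)
  moreover have "(B - s*q)^2 / q \<ge> 0" using q0 by simp
  ultimately show ?thesis using e by linarith
qed

lemma rho_le1:
  fixes s :: real assumes s1: "s \<ge> 1" shows "2 / s - 1 / s^2 \<le> 1"
proof -
  have s0: "s \<noteq> 0" using s1 by simp
  have "2 / s - 1 / s^2 = 1 - (s - 1)^2 / s^2" using s0 by (simp add: field_simps power2_eq_square)
  moreover have "(s - 1)^2 / s^2 \<ge> 0" by simp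
  ultimately show ?thesis by linarith
qed

lemma arith2:
  fixes s q B a w Y :: real
  assumes s1: "s \<ge> 1" and q0: "q > 0" and Bq: "B \<ge> q" and aw: "a \<le> w"
    and wK: "w \<le> s^2 - 1" and aq: "(a + 1) * q > B"
    and Y: "Y \<ge> a * B + (w - a) * q"
  shows "Y + (1 - (2 / s - 1 / s^2)) * B \<ge> (2 / s - 1 / s^2) * w * B"
proof -
  have s0: "s \<noteq> 0" using s1 by simp
  define \<rho> where "\<rho> = 2 / s - 1 / s^2"
  have \<rho>K: "\<rho> * s^2 = 2*s - 1" using s0 by (simp add: \<rho>_def field_simps power2_eq_square)
  have \<rho>1: "\<rho> \<le> 1" using rho_le1[OF s1] by (simp add: \<rho>_def)
  have aB: "a \<ge> (B - q) / q" using aq q0 by (simp add: field_simps)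
  hence "a * (B - q) \<ge> ((B - q) / q) * (B - q)" using Bq by (intro mult_right_mono) auto
  hence h: "Y + (1 - \<rho>) * B - \<rho> * w * B \<ge> ((B - q) / q) * (B - q) + w * (q - \<rho> * B) + (1 - \<rho>) * B"
    using Y by (simp add: algebra_simps)
  have "Y + (1 - \<rho>) * B - \<rho> * w * B \<ge> 0"
  proof (cases "q - \<rho> * B \<ge> 0")
    case True
    have "w \<ge> (B - q) / q" using aw aB by linarith
    hence "w * (q - \<rho> * B) \<ge> ((B - q) / q) * (q - \<rho> * B)" using True by (intro mult_right_mono) auto
    moreover have "((B - q) / q) * (B - q) + ((B - q) / q) * (q - \<rho> * B) + (1 - \<rho>) * B = (1 - \<rho>) * B^2 / q"
      using q0 by (simp add: field_simps power2_eq_square)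
    moreover have "(1 - \<rho>) * B^2 / q \<ge> 0" using \<rho>1 q0 by simp
    ultimately show ?thesis using h by linarith
  next
    case False
    hence "w * (q - \<rho> * B) \<ge> (s^2 - 1) * (q - \<rho> * B)" using wK by (intro mult_right_mono_neg) auto
    moreover have "((B - q) / q) * (B - q) + (s^2 - 1) * (q - \<rho> * B) + (1 - \<rho>) * B = (B - s * q)^2 / q"
    proof -
      have "((B - q) / q) * (B - q) + (s^2 - 1) * (q - \<rho> * B) + (1 - \<rho>) * B
          = ((B - q) * (B - q) + (s^2 - 1) * q * q - (\<rho> * s^2) * B * q + B * q) / q"
        using q0 by (simp add: field_simps)
      also have "\<dots> = ((B - q) * (B - q) + (s^2 - 1) * q * q - (2*s - 1) * B * q + B * q) / q"
        by (simp only: \<rho>K)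
      also have "\<dots> = (B - s * q)^2 / q" by (simp add: algebra_simps power2_eq_square)
      finally show ?thesis .
    qed
    moreover have "(B - s * q)^2 / q \<ge> 0" using q0 by simp
    ultimately show ?thesis using h by linarith
  qed
  thus ?thesis by (simp add: \<rho>_def)
qed

lemma combine:
  fixes \<rho> a b Y X wB :: real
  assumes h1: "\<rho> * a \<le> \<rho> * (b + (wB - Y))" and h2: "(1 - \<rho>) * (Y + X) \<le> (1 - \<rho>) * b"
    and h3: "Y + (1 - \<rho>) * X \<ge> \<rho> * wB"
  shows "\<rho> * a \<le> b"
proof -
  have e1: "\<rho> * (b + (wB - Y)) = \<rho> * b + \<rho> * wB - \<rho> * Y" by (simp add: algebra_simps)
  have e2: "(1 - \<rho>) * (Y + X) = Y + X - \<rho> * Y - \<rho> * X" by (simp add: algebra_simps)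
  have e3: "(1 - \<rho>) * b = b - \<rho> * b" by (simp add: algebra_simps)
  have e4: "(1 - \<rho>) * X = X - \<rho> * X" by (simp add: algebra_simps)
  show ?thesis using h1 h2 h3 unfolding e1 e2 e3 e4 by linarith
qed

theorem theorem3:
  fixes C :: "'c set" and n k :: nat and A :: "nat \<Rightarrow> 'c set" and W Wb :: "'c set"
  assumes "is_instance C n A k"
    and "opt_sw C n A k > 0"
    and "gjcr_output C n A k W"
    and "av_completion C n A k W Wb"
  shows "util_ratio C n A k Wb \<ge> 2 / sqrt (real k) - 1 / real k"
proof -
  note inst = assms(1)
  have finC: "finite C" and k1: "1 \<le> k" and kC: "k \<le> card C"
    using inst by (auto simp: is_instance_def)
  define Sset where "Sset = {sw n A W' | W'. W' \<subseteq> C \<and> card W' = k}"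
  have "Sset = (\<lambda>W'. sw n A W') ` {W'. W' \<subseteq> C \<and> card W' = k}" by (auto simp: Sset_def)
  moreover have "finite {W'. W' \<subseteq> C \<and> card W' = k}" using finC by simp
  ultimately have finS: "finite Sset" by simp
  obtain W0 where "W0 \<subseteq> C" "card W0 = k" using obtain_subset_with_card_n[OF kC] by metis
  hence "Sset \<noteq> {}" by (auto simp: Sset_def)
  hence "Max Sset \<in> Sset" using finS by simp
  then obtain Wo where WoC: "Wo \<subseteq> C" and cWo: "card Wo = k" and optWo: "opt_sw C n A k = sw n A Wo"
    by (auto simp: Sset_def opt_sw_def)
  have n0: "n > 0"
  proof (rule ccontr)
    assume "\<not> n > 0"
    hence "voters n = {}" by (simp add: voters_def)
    hence "sw n A Wo = 0" by (simp add: sw_def)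
    thus False using assms(2) optWo by simp
  qed
  from assms(3) have reach: "gjcr_reach C n A k W" and noT: "\<And>c l N'. \<not> gjcr_triple C n A k W c l N'"
    unfolding gjcr_output_def by auto
  define s where "s c = real (card (supporters n A c))" for c
  define Out where "Out = C - W"
  define B where "B = (if Out = {} then 0 else Max (s ` Out))"
  have finOut: "finite Out" using finC by (simp add: Out_def)
  have Bmax: "\<And>c. c \<in> Out \<Longrightarrow> s c \<le> B" using finOut by (auto simp: B_def)
  have c0ex: "Out \<noteq> {} \<Longrightarrow> \<exists>c0\<in>Out. s c0 = B"
  proof -
    assume "Out \<noteq> {}"
    hence "Max (s ` Out) \<in> s ` Out" using finOut by simp
    thus ?thesis using \<open>Out \<noteq> {}\<close> by (auto simp: B_def)
  qed
  have B0: "B \<ge> 0"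
  proof (cases "Out = {}")
    case True thus ?thesis by (simp add: B_def)
  next
    case False then obtain c where "c \<in> Out" by auto
    thus ?thesis using Bmax[of c] by (simp add: s_def)
  qed
  have INVW: "INV C n A k B W" using INV_reach[OF inst n0 reach] .
  hence WC: "W \<subseteq> C" and P1: "\<forall>c\<in>W. real n / real k \<le> s c" unfolding INV_def s_def by auto
  from INVW obtain \<phi> m \<beta> Big G where H: "INV2 C n A k B W \<phi> m \<beta> Big G" unfolding INV_def by blast
  have i1: "(\<Sum>i\<in>voters n. \<phi> i) = real (card W)" using H unfolding INV2_def by blast
  have i2: "\<forall>i\<in>voters n. \<phi> i \<le> real k / real n" using H unfolding INV2_def by blast
  have i7: "Big \<subseteq> voters n" using H unfolding INV2_def by blast
  have i11: "real \<beta> * real n / real k < B \<longrightarrow> (\<forall>i\<in>Big. \<phi> i < real k / real n)"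
    using H unfolding INV2_def by blast
  have i12: "1 \<le> \<beta> \<longrightarrow> Big \<noteq> {}" using H unfolding INV2_def by blast
  have i13: "\<beta> \<le> card {c\<in>W. B \<le> real (card (supporters n A c))}" using H unfolding INV2_def by blast
  have i14: "\<forall>c0\<in>C. c0 \<notin> W \<longrightarrow> B \<le> real (card (supporters n A c0)) \<longrightarrow>
      (\<forall>j. j \<le> card W \<longrightarrow> real j * real n / real k \<le> B \<longrightarrow> j \<le> \<beta>)"
    using H unfolding INV2_def by blast
  have finW: "finite W" using WC finC finite_subset by blast
  have finV: "finite (voters n)" by (simp add: voters_def)
  have cardV: "card (voters n) = n" by (simp add: voters_def)
  define w where "w = card W"
  define q where "q = real n / real k"
  have q0: "q > 0" using n0 k1 by (simp add: q_def)
  have sumk: "(\<Sum>i\<in>voters n. real k / real n) = real k" using n0 cardV by simp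
  have wk: "w \<le> k"
  proof -
    have "(\<Sum>i\<in>voters n. \<phi> i) \<le> (\<Sum>i\<in>voters n. real k / real n)" using i2 by (intro sum_mono) auto
    thus ?thesis using i1 sumk by (simp add: w_def)
  qed
  from assms(4) obtain T where TO: "T \<subseteq> C - W" and cT: "card T = k - card W" and Wb: "Wb = W \<union> T"
    and Topt: "\<And>T'. T' \<subseteq> C - W \<Longrightarrow> card T' = k - card W \<Longrightarrow>
              (\<Sum>c\<in>T'. card (supporters n A c)) \<le> (\<Sum>c\<in>T. card (supporters n A c))"
    unfolding av_completion_def by blast
  have ToptR: "\<And>T'. T' \<subseteq> Out \<Longrightarrow> card T' = k - w \<Longrightarrow> (\<Sum>c\<in>T'. s c) \<le> (\<Sum>c\<in>T. s c)"
  proof -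
    fix T' assume "T' \<subseteq> Out" "card T' = k - w"
    hence "(\<Sum>c\<in>T'. card (supporters n A c)) \<le> (\<Sum>c\<in>T. card (supporters n A c))"
      using Topt by (simp add: Out_def w_def)
    hence "real (\<Sum>c\<in>T'. card (supporters n A c)) \<le> real (\<Sum>c\<in>T. card (supporters n A c))"
      by (simp only: of_nat_le_iff)
    thus "(\<Sum>c\<in>T'. s c) \<le> (\<Sum>c\<in>T. s c)" by (simp add: s_def)
  qed
  have finT: "finite T" using TO finC finite_subset by blast
  have TOut: "T \<subseteq> Out" using TO by (simp add: Out_def)
  have disjWT: "W \<inter> T = {}" using TO by auto
  have s0: "\<And>c. s c \<ge> 0" by (simp add: s_def)
  have swR: "\<And>X. finite X \<Longrightarrow> real (sw n A X) = (\<Sum>c\<in>X. s c)"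
    by (simp add: sw_sum s_def)
  have swWb: "real (sw n A Wb) = (\<Sum>c\<in>W. s c) + (\<Sum>c\<in>T. s c)"
    using swR[of Wb] finW finT disjWT Wb by (simp add: sum.union_disjoint)
  have finWo: "finite Wo" using WoC finC finite_subset by blast
  have swWo: "real (sw n A Wo) = (\<Sum>c\<in>Wo \<inter> W. s c) + (\<Sum>c\<in>Wo - W. s c)"
  proof -
    have "Wo = (Wo \<inter> W) \<union> (Wo - W)" by auto
    hence "(\<Sum>c\<in>Wo. s c) = (\<Sum>c\<in>Wo \<inter> W. s c) + (\<Sum>c\<in>Wo - W. s c)"
      using finWo by (metis Diff_Diff_Int Int_commute sum.subset_diff Diff_subset finite_Diff)
    thus ?thesis using swR[OF finWo] by simp
  qed
  define y where "y c = min (s c) B" for c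
  have E1: "real (sw n A Wo) \<le> real (sw n A Wb) + (\<Sum>c\<in>W. B - y c)"
  proof -
    define U where "U = Wo - W"
    have UOut: "U \<subseteq> Out" using WoC by (auto simp: U_def Out_def)
    have finU: "finite U" using finWo by (simp add: U_def)
    have cU: "card U = k - card (Wo \<inter> W)"
      using card_Diff_subset_Int[of Wo W] finWo cWo by (simp add: U_def Int_commute)
    have cI: "card (Wo \<inter> W) \<le> w" using finW by (simp add: w_def card_mono)
    have cIk: "card (Wo \<inter> W) \<le> k" using cI wk by simp
    have "k - w \<le> card U" using cU cI by simp
    then obtain T2 where T2U: "T2 \<subseteq> U" and cT2: "card T2 = k - w"
      using obtain_subset_with_card_n by metis
    have finT2: "finite T2" using T2U finU finite_subset by blast
    have sT2: "(\<Sum>c\<in>T2. s c) \<le> (\<Sum>c\<in>T. s c)" using ToptR T2U UOut cT2 by blast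
    have cUT2: "card (U - T2) = card (W - Wo)"
    proof -
      have "card (U - T2) = card U - card T2" using T2U finT2 by (simp add: card_Diff_subset)
      also have "\<dots> = w - card (Wo \<inter> W)" using cU cT2 cI wk by simp
      also have "\<dots> = card (W - Wo)"
        using card_Diff_subset_Int[of W Wo] finW by (simp add: w_def Int_commute)
      finally show ?thesis .
    qed
    have "(\<Sum>c\<in>U - T2. s c) \<le> real (card (U - T2)) * B"
      using Bmax UOut by (intro sum_bounded_above) auto
    hence sUT2: "(\<Sum>c\<in>U - T2. s c) \<le> (\<Sum>c\<in>W - Wo. B)" using cUT2 by simp
    have sU: "(\<Sum>c\<in>U. s c) = (\<Sum>c\<in>T2. s c) + (\<Sum>c\<in>U - T2. s c)"
      using sum.subset_diff[OF T2U finU, of s] by simp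
    have sI: "(\<Sum>c\<in>Wo \<inter> W. s c) = (\<Sum>c\<in>W. s c) - (\<Sum>c\<in>W - Wo. s c)"
    proof -
      have "Wo \<inter> W \<subseteq> W" by auto
      from sum.subset_diff[OF this finW, of s] have "(\<Sum>c\<in>W. s c) = (\<Sum>c\<in>W - Wo. s c) + (\<Sum>c\<in>Wo \<inter> W. s c)"
        by (simp add: Diff_Int)
      thus ?thesis by simp
    qed
    have "real (sw n A Wo) \<le> real (sw n A Wb) + (\<Sum>c\<in>W - Wo. B) - (\<Sum>c\<in>W - Wo. s c)"
      using swWo swWb sU sI sT2 sUT2 by (simp add: U_def)
    also have "\<dots> = real (sw n A Wb) + (\<Sum>c\<in>W - Wo. B - s c)" by (simp add: sum_subtractf)
    also have "(\<Sum>c\<in>W - Wo. B - s c) \<le> (\<Sum>c\<in>W - Wo. B - y c)"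
      by (intro sum_mono) (auto simp: y_def)
    also have "\<dots> \<le> (\<Sum>c\<in>W. B - y c)"
      using finW by (intro sum_mono2) (auto simp: y_def)
    finally show ?thesis by simp
  qed
  define Y where "Y = (\<Sum>c\<in>W. y c)"
  define X where "X = (if w < k then B else 0)"
  have E2: "real (sw n A Wb) \<ge> Y + X"
  proof -
    have "Y \<le> (\<Sum>c\<in>W. s c)" unfolding Y_def by (intro sum_mono) (auto simp: y_def)
    moreover have "X \<le> (\<Sum>c\<in>T. s c)"
    proof (cases "w < k")
      case False thus ?thesis using s0 by (simp add: X_def sum_nonneg)
    next
      case True
      hence "T \<noteq> {}" using cT by (auto simp: w_def)
      hence "Out \<noteq> {}" using TOut by auto
      then obtain c0 where c0O: "c0 \<in> Out" and sc0: "s c0 = B" using c0ex by blast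
      have "B \<le> (\<Sum>c\<in>T. s c)"
      proof (cases "c0 \<in> T")
        case True thus ?thesis using sc0 finT s0 by (metis member_le_sum)
      next
        case False
        obtain t where tT: "t \<in> T" using \<open>T \<noteq> {}\<close> by auto
        define T2 where "T2 = insert c0 (T - {t})"
        have "T2 \<subseteq> Out" using TOut c0O tT by (auto simp: T2_def)
        moreover have "card T2 = k - w"
        proof -
          have "card (T - {t}) = card T - 1" using tT finT by simp
          moreover have "card T \<ge> 1" using tT finT by (metis One_nat_def Suc_leI card_gt_0_iff empty_iff)
          moreover have "c0 \<notin> T - {t}" using False by simp
          ultimately have "card T2 = card T" using finT by (simp add: T2_def)
          thus ?thesis using cT by (simp add: w_def)
        qed
        ultimately have "(\<Sum>c\<in>T2. s c) \<le> (\<Sum>c\<in>T. s c)" using ToptR by blast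
        moreover have "s c0 \<le> (\<Sum>c\<in>T2. s c)"
          using finT s0 by (intro member_le_sum) (auto simp: T2_def)
        ultimately show ?thesis using sc0 by linarith
      qed
      thus ?thesis using True by (simp add: X_def)
    qed
    ultimately show ?thesis using swWb by linarith
  qed
  define sk where "sk = sqrt (real k)"
  have sk1: "sk \<ge> 1" using k1 by (simp add: sk_def)
  have sk2: "sk^2 = real k" by (simp add: sk_def)
  define \<rho> where "\<rho> = 2 / sqrt (real k) - 1 / real k"
  have \<rho>def: "\<rho> = 2 / sk - 1 / sk^2" using sk2 by (simp add: \<rho>_def sk_def)
  have \<rho>1: "\<rho> \<le> 1" using rho_le1[OF sk1] \<rho>def by simp
  have \<rho>0: "\<rho> \<ge> 0"
  proof -
    have "1 / sk^2 \<le> 1 / sk" using sk1 by (intro divide_left_mono) (auto simp: power2_eq_square)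
    moreover have "1 / sk \<le> 2 / sk" using sk1 by (intro divide_right_mono) auto
    ultimately show ?thesis using \<rho>def by linarith
  qed
  have E3: "Y + (1 - \<rho>) * X \<ge> \<rho> * real w * B"
  proof (cases "B < q")
    case True
    have "\<forall>c\<in>W. y c = B" using P1 True by (auto simp: y_def q_def)
    hence "Y = real w * B" by (simp add: Y_def w_def)
    moreover have "(1 - \<rho>) * X \<ge> 0" using \<rho>1 B0 by (simp add: X_def)
    moreover have "\<rho> * real w * B \<le> 1 * real w * B" using \<rho>1 B0
      by (intro mult_right_mono) auto
    ultimately show ?thesis by simp
  next
    case False
    hence qB: "q \<le> B" by simp
    hence "Out \<noteq> {}" using q0 by (auto simp: B_def)
    then obtain c0 where c0O: "c0 \<in> Out" and sc0: "s c0 = B" using c0ex by blast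
    have c0C: "c0 \<in> C" and c0W: "c0 \<notin> W" using c0O by (auto simp: Out_def)
    define Wbig where "Wbig = {c\<in>W. B \<le> s c}"
    define a where "a = card Wbig"
    have WbigW: "Wbig \<subseteq> W" by (auto simp: Wbig_def)
    have aw: "a \<le> w" unfolding a_def w_def using WbigW finW by (simp add: card_mono)
    have ba: "\<beta> \<le> a" using i13 by (simp add: a_def Wbig_def s_def)
    have i14': "\<And>j. j \<le> w \<Longrightarrow> real j * q \<le> B \<Longrightarrow> j \<le> \<beta>"
      using i14 c0C c0W sc0 by (simp add: w_def q_def s_def)
    have Ya: "Y \<ge> real a * B + (real w - real a) * q"
    proof -
      have "Y = (\<Sum>c\<in>W - Wbig. y c) + (\<Sum>c\<in>Wbig. y c)"
        unfolding Y_def using sum.subset_diff[OF WbigW finW, of y] by simp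
      moreover have "(\<Sum>c\<in>Wbig. y c) = real a * B"
        by (simp add: a_def Wbig_def y_def)
      moreover have "(\<Sum>c\<in>W - Wbig. y c) \<ge> real (card (W - Wbig)) * q"
        using P1 by (intro sum_bounded_below) (auto simp: Wbig_def y_def q_def)
      moreover have "card (W - Wbig) = w - a"
        using WbigW finW by (simp add: card_Diff_subset a_def w_def finite_subset)
      ultimately show ?thesis using aw by (simp add: of_nat_diff algebra_simps)
    qed
    have F1: "(real a + 1) * q > B"
    proof (rule ccontr)
      assume "\<not> (real a + 1) * q > B"
      hence aB: "real (a + 1) * q \<le> B" by (simp add: add.commute)
      show False
      proof (cases "a + 1 \<le> w")
        case True
        thus False using i14'[OF True aB] ba by simp
      next
        case False
        hence wa: "w = a" using aw by simp
        have jq: "real (w + 1) * real n / real k \<le> real (card (supporters n A c0))"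
          using aB wa sc0 by (simp add: q_def s_def)
        have "real (card (supporters n A c0)) \<le> real n" using supp_le_n by simp
        hence "real (w + 1) * real n / real k \<le> real n" using jq by linarith
        hence "real (w + 1) * real n \<le> real n * real k" using k1 by (simp add: pos_divide_le_eq)
        hence "real (w + 1) * real n \<le> real k * real n" by (simp add: mult.commute)
        moreover have "0 < real n" using n0 by simp
        ultimately have "real (w + 1) \<le> real k" by (rule mult_right_le_imp_le)
        hence jk: "w + 1 \<le> k" by (simp only: of_nat_le_iff)
        have lowc: "\<forall>i\<in>supporters n A c0. card (A i \<inter> W) < w + 1"
          using finW by (simp add: card_mono le_imp_less_Suc w_def)
        have "gjcr_triple C n A k W c0 (w + 1) (supporters n A c0)"
          unfolding gjcr_triple_def using c0C c0W jk jq lowc by auto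
        thus False using noT by blast
      qed
    qed
    show ?thesis
    proof (cases "w < k")
      case True
      have "Y + (1 - (2 / sk - 1 / sk^2)) * B \<ge> (2 / sk - 1 / sk^2) * real w * B"
        using arith2[OF sk1 q0 qB _ _ F1 Ya] aw True sk2 by simp
      thus ?thesis using True \<rho>def by (simp add: X_def)
    next
      case False
      hence wk': "w = k" using wk by simp
      have "real a * q \<ge> B"
      proof (rule ccontr)
        assume "\<not> real a * q \<ge> B"
        moreover have "real \<beta> * q \<le> real a * q" using ba q0 by (intro mult_right_mono) auto
        ultimately have "real \<beta> * q < B" by linarith
        hence bq: "real \<beta> * real n / real k < B" by (simp add: q_def)
        have "1 \<le> \<beta>" using i14'[of 1] wk' k1 qB by simp
        hence "Big \<noteq> {}" using i12 by simp
        then obtain i0 where i0: "i0 \<in> Big" by auto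
        have "(\<Sum>i\<in>voters n. \<phi> i) < (\<Sum>i\<in>voters n. real k / real n)"
        proof (rule sum_strict_mono_ex1[OF finV])
          show "\<forall>x\<in>voters n. \<phi> x \<le> real k / real n" using i2 by blast
          show "\<exists>a\<in>voters n. \<phi> a < real k / real n" using i0 i7 i11 bq by blast
        qed
        hence "w < k" using i1 sumk by (simp add: w_def)
        thus False using wk' by simp
      qed
      hence "Y \<ge> (2 / sk - 1 / sk^2) * sk^2 * B"
        using arith1[OF sk1 q0 qB _, of "real a" Y] Ya wk' sk2 by simp
      thus ?thesis using wk' sk2 \<rho>def by (simp add: X_def)
    qed
  qed
  have Ysum: "(\<Sum>c\<in>W. B - y c) = real w * B - Y"
    by (simp add: sum_subtractf Y_def w_def)
  have h1: "\<rho> * real (sw n A Wo) \<le> \<rho> * (real (sw n A Wb) + (real w * B - Y))"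
    using E1 Ysum \<rho>0 by (intro mult_left_mono) auto
  have h2: "(1 - \<rho>) * (Y + X) \<le> (1 - \<rho>) * real (sw n A Wb)"
    using E2 \<rho>1 by (intro mult_left_mono) auto
  have "\<rho> * real (sw n A Wo) \<le> real (sw n A Wb)"
    using combine[OF h1 h2] E3 by (simp add: mult.assoc)
  moreover have pos: "real (sw n A Wo) > 0" using assms(2) optWo by simp
  ultimately have "\<rho> \<le> real (sw n A Wb) / real (sw n A Wo)" by (simp add: pos_le_divide_eq)
  thus ?thesis unfolding util_ratio_def using optWo \<rho>_def by simp
qed

end
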